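(* Let $q\ge2$ be an integer and $m\ge0$ an integer. Then, in base $q$, $$a_{q^m}=q^m\left(2q^{\frac{q^m-1}{q-1}}-1\right).$$ In particular, for $q=2$, $a_{2^m}=2^m\left(2^{2^m}-1\right)$.
   Context: For an integer base $q\ge2$, $s_q(m)$ denotes the sum of the base-$q$ digits of $m$, and $a_k$ denotes the smallest positive multiple of $k$ with $s_q(a_k)=k$. *)

theory Defs
  imports Main
begin

fun digit_sum :: "nat \<Rightarrow> nat \<Rightarrow> nat" where
  "digit_sum q m = (if q < 2 \<or> m = 0 then 0 else m mod q + digit_sum q (m div q))"

declare digit_sum.simps [simp del]

definition a_seq :: "nat \<Rightarrow> nat \<Rightarrow> nat" where
  "a_seq q k = (LEAST n. n > 0 \<and> k dvd n \<and> digit_sum q n = k)"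

end

theory Submission
  imports Defs
begin

lemma ds_step: "q \<ge> 2 \<Longrightarrow> digit_sum q n = n mod q + digit_sum q (n div q)"
  by (cases "n = 0") (simp_all add: digit_sum.simps[of q n] digit_sum.simps[of q 0])

lemma ds_zero: "digit_sum q 0 = 0"
  by (simp add: digit_sum.simps)

lemma ds_one: "q \<ge> 2 \<Longrightarrow> digit_sum q 1 = 1"
proof -
  assume q: "q \<ge> 2"
  have "digit_sum q 1 = 1 mod q + digit_sum q (1 div q)" using q by (rule ds_step)
  also have "1 mod q = 1" using q by simp
  also have "1 div q = 0" using q by simp
  finally show ?thesis by (simp add: ds_zero)
qed

lemma ds_split: "q \<ge> 2 \<Longrightarrow> digit_sum q n = digit_sum q (n mod q^t) + digit_sum q (n div q^t)"
proof (induction t arbitrary: n)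
  case 0 then show ?case by (simp add: ds_zero)
next
  case (Suc t)
  have a: "n mod q^Suc t = q * (n div q mod q^t) + n mod q"
    by (simp add: mod_mult2_eq)
  have b: "(n mod q^Suc t) mod q = n mod q" unfolding a by simp
  have c: "(n mod q^Suc t) div q = n div q mod q^t" unfolding a using Suc.prems by simp
  have "digit_sum q n = n mod q + digit_sum q (n div q)" using ds_step Suc.prems by blast
  also have "\<dots> = n mod q + digit_sum q (n div q mod q^t) + digit_sum q (n div q div q^t)"
    using Suc.IH[OF Suc.prems, of "n div q"] by linarith
  also have "n div q div q^t = n div q^Suc t" by (simp add: div_mult2_eq)
  also have "n mod q + digit_sum q (n div q mod q^t) = digit_sum q (n mod q^Suc t)"
    using ds_step[OF Suc.prems, of "n mod q^Suc t"] b c by simp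
  finally show ?case .
qed

lemma ds_shift: "q \<ge> 2 \<Longrightarrow> digit_sum q (q^m * b) = digit_sum q b"
  using ds_split[of q "q^m*b" m] by (simp add: ds_zero)

lemma ds_bound: "q \<ge> 2 \<Longrightarrow> c < q^t \<Longrightarrow>
   digit_sum q c \<le> (q-1)*t \<and> (digit_sum q c = (q-1)*t \<longrightarrow> c = q^t - 1)"
proof (induction t arbitrary: c)
  case 0 then show ?case by (simp add: ds_zero)
next
  case (Suc t)
  have m: "c mod q \<le> q - 1" proof -
    have "c mod q < q" using Suc.prems(1) by simp
    then show ?thesis by linarith
  qed
  have d: "c div q < q^t" using Suc.prems by (simp add: less_mult_imp_div_less mult.commute)
  note IH = Suc.IH[OF Suc.prems(1) d]
  have e: "digit_sum q c = c mod q + digit_sum q (c div q)" using ds_step Suc.prems by blast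
  have le: "digit_sum q c \<le> (q-1)*Suc t" using e m IH by simp
  moreover have "c = q^Suc t - 1" if eq: "digit_sum q c = (q-1)*Suc t"
  proof -
    have "c mod q = q - 1" "digit_sum q (c div q) = (q-1)*t" using e m IH eq by auto
    then have "c div q = q^t - 1" using IH by auto
    have "c = q * (c div q) + c mod q" by simp
    also have "\<dots> = q * (q^t - 1) + (q - 1)" using \<open>c mod q = q - 1\<close> \<open>c div q = q^t - 1\<close> by simp
    also have "\<dots> = q^Suc t - 1"
    proof -
      have "q^t \<ge> 1" using Suc.prems(1) by simp
      then have "q * q^t \<ge> q * 1" by (rule mult_le_mono2)
      then show ?thesis using Suc.prems(1) by (simp add: diff_mult_distrib2)
    qed
    finally show ?thesis .
  qed
  ultimately show ?case by blast
qed

lemma ds_full: "q \<ge> 2 \<Longrightarrow> digit_sum q (q^t - 1) = (q-1)*t"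
proof (induction t)
  case 0 then show ?case by (simp add: ds_zero)
next
  case (Suc t)
  have p: "q^t \<ge> 1" using Suc.prems by simp
  have "q * q^t \<ge> q * 1" using p by (rule mult_le_mono2)
  then have "q^Suc t - 1 = (q - 1) + q * (q^t - 1)" using Suc.prems
    by (simp add: diff_mult_distrib2)
  then have x: "q^Suc t - 1 = (q - 1) + q * (q^t - 1)" .
  have mq: "(q^Suc t - 1) mod q = q - 1" unfolding x mod_mult_self2 using Suc.prems by simp
  have dq: "(q^Suc t - 1) div q = q^t - 1" unfolding x
    using Suc.prems div_mult_self2[of q "q-1" "q^t-1"] by simp
  have "digit_sum q (q^Suc t - 1) = (q - 1) + digit_sum q (q^t - 1)"
    using ds_step[OF Suc.prems, of "q^Suc t - 1"] mq dq by simp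
  then show ?case using Suc.IH[OF Suc.prems] by simp
qed

lemma geo: "(q::nat) \<ge> 1 \<Longrightarrow> q^m - 1 = (q-1) * (\<Sum>i<m. q^i)"
proof (induction m)
  case 0 then show ?case by simp
next
  case (Suc m)
  have "q^m \<ge> 1" using Suc.prems by simp
  define S where "S = (\<Sum>i<m. q^i)"
  have IH: "q^m - 1 = (q-1)*S" using Suc by (simp add: S_def)
  have e1: "(q-1)*(S+q^m) = (q-1)*S + (q-1)*q^m" by (simp add: add_mult_distrib2)
  have e2: "(q-1)*q^m = q*q^m - q^m" by (simp add: diff_mult_distrib)
  have "q*q^m \<ge> 1*q^m" using Suc.prems by (rule mult_le_mono1)
  then have "q^Suc m - 1 = (q-1)*(S+q^m)" using e1 e2 IH \<open>q^m \<ge> 1\<close> by simp linarith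
  then show ?case by (simp add: S_def)
qed

theorem mainTheorem15:
  fixes q m :: nat
  assumes "q \<ge> 2"
  shows "a_seq q (q ^ m) = q ^ m * (2 * q ^ ((q ^ m - 1) div (q - 1)) - 1)"
proof -
  define N where "N = (\<Sum>i<m. q^i)"
  have gN: "q^m - 1 = (q-1)*N" using geo[of q m] assms by (simp add: N_def)
  have Ndef: "(q ^ m - 1) div (q - 1) = N" using gN assms by simp
  have qm: "q^m = (q-1)*N + 1" using gN assms
  proof -
    have "q^m \<ge> 1" using assms by simp
    then show ?thesis using gN by linarith
  qed
  define B where "B = 2 * q^N - 1"
  have QN: "q^N \<ge> 1" using assms by simp
  have Bx: "B = (q^N - 1) + q^N * 1" using QN by (simp add: B_def)
  have Bsplit: "B mod q^N = q^N - 1" "B div q^N = 1"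
    unfolding Bx mod_mult_self2 using QN div_mult_self2[of "q^N" "q^N - 1" 1] assms by simp_all
  have sB: "digit_sum q B = q^m"
    using ds_split[OF assms, of B N] Bsplit ds_full[OF assms, of N] ds_one[OF assms] qm by simp
  have min: "B \<le> b" if "digit_sum q b = q^m" for b
  proof (rule ccontr)
    assume "\<not> B \<le> b"
    then have bl: "b < B" by simp
    show False
    proof (cases "b < q^N")
      case True
      then show ?thesis using ds_bound[OF assms True] that qm by simp
    next
      case False
      have d1: "b div q^N \<ge> 1" proof -
        have "q^N div q^N = 1" using assms by (intro div_self) simp
        then show ?thesis using False div_le_mono[of "q^N" b "q^N"] by simp
      qed
      have "b < q^N * 2" using bl by (simp add: B_def)
      then have d2: "b div q^N < 2" using QN by (simp add: less_mult_imp_div_less)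
      have bd: "b div q^N = 1" using d1 d2 by simp
      have "b = q^N + b mod q^N" using div_mult_mod_eq[of b "q^N"] bd by simp
      then have bm: "b mod q^N < q^N - 1" using bl by (simp add: B_def)
      have "b mod q^N < q^N" using assms by (intro mod_less_divisor) simp
      from ds_bound[OF assms this] bm
      have "digit_sum q (b mod q^N) < (q-1)*N" by fastforce
      then show False using ds_split[OF assms, of b N] bd ds_one[OF assms] that qm by simp
    qed
  qed
  have Bpos: "B > 0" using QN by (simp add: B_def)
  have "a_seq q (q^m) = q^m * B"
    unfolding a_seq_def
  proof (rule Least_equality)
    show "0 < q^m * B \<and> q^m dvd q^m * B \<and> digit_sum q (q^m * B) = q^m"
      using Bpos assms ds_shift[OF assms] sB by simp
  next
    fix n assume h: "0 < n \<and> q^m dvd n \<and> digit_sum q n = q^m"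
    then obtain b where nb: "n = q^m * b" by blast
    then have "digit_sum q b = q^m" using h ds_shift[OF assms] by simp
    then show "q^m * B \<le> n" using min nb by simp
  qed
  then show ?thesis using Ndef B_def by simp
qed

end
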